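(* Let $\mathcal{F}$ satisfy the standard conditions. Then the set $\mathbb{R}_{\mathcal{F}}$ of $\mathcal{F}$-computable real numbers is a subfield of $\mathbb{R}$.
   Context: $\mathbb{N}=\{0,1,2,\dots\}$. $\mathcal{F}$ is a set of functions $\mathbb{N}^n\to\mathbb{N}$; it satisfies the standard conditions if it contains the zero function, the successor, all projections $P^n_i$, addition, multiplication and modified subtraction $x\dot- y=\max(x-y,0)$, and is closed under composition. An $\mathcal{F}$-sequence is $A:\mathbb{N}\to\mathbb{Q}$, $A(x)=\frac{f(x)-g(x)}{h(x)+1}$, with $f,g,h:\mathbb{N}\to\mathbb{N}$ in $\mathcal{F}$. A real number $\alpha$ is $\mathcal{F}$-computable if there is an $\mathcal{F}$-sequence $A$ with $|A(x)-\alpha|\le\frac1{x+1}$ for all $x$. *)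

theory Defs
  imports Complex_Main
begin

text \<open>A class of functions \<open>\<nat>\<^sup>n \<rightarrow> \<nat>\<close> (for varying n) is represented as
  \<open>F :: nat \<Rightarrow> (nat list \<Rightarrow> nat) set\<close>: \<open>F n\<close> collects the n-ary members, an n-ary
  function being a function on lists, of which only the values on lists of
  length n matter.\<close>

definition in_cls :: "(nat \<Rightarrow> (nat list \<Rightarrow> nat) set) \<Rightarrow> nat \<Rightarrow> (nat list \<Rightarrow> nat) \<Rightarrow> bool" where
  "in_cls F n g \<longleftrightarrow> (\<exists>f\<in>F n. \<forall>xs. length xs = n \<longrightarrow> f xs = g xs)"

definition standard_conditions :: "(nat \<Rightarrow> (nat list \<Rightarrow> nat) set) \<Rightarrow> bool" where
  "standard_conditions F \<longleftrightarrow>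
     in_cls F 1 (\<lambda>xs. 0) \<and>
     in_cls F 1 (\<lambda>xs. Suc (xs ! 0)) \<and>
     (\<forall>n i. 1 \<le> i \<and> i \<le> n \<longrightarrow> in_cls F n (\<lambda>xs. xs ! (i - 1))) \<and>
     in_cls F 2 (\<lambda>xs. xs ! 0 + xs ! 1) \<and>
     in_cls F 2 (\<lambda>xs. xs ! 0 * xs ! 1) \<and>
     in_cls F 2 (\<lambda>xs. xs ! 0 - xs ! 1) \<and>
     (\<forall>m n f gs. in_cls F m f \<and> length gs = m \<and> (\<forall>g\<in>set gs. in_cls F n g)
        \<longrightarrow> in_cls F n (\<lambda>xs. f (map (\<lambda>g. g xs) gs)))"

definition unary_in :: "(nat \<Rightarrow> (nat list \<Rightarrow> nat) set) \<Rightarrow> (nat \<Rightarrow> nat) \<Rightarrow> bool" where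
  "unary_in F f \<longleftrightarrow> in_cls F 1 (\<lambda>xs. f (xs ! 0))"

definition F_sequence :: "(nat \<Rightarrow> (nat list \<Rightarrow> nat) set) \<Rightarrow> (nat \<Rightarrow> rat) \<Rightarrow> bool" where
  "F_sequence F A \<longleftrightarrow> (\<exists>f g h. unary_in F f \<and> unary_in F g \<and> unary_in F h \<and>
     (\<forall>x. A x = (of_nat (f x) - of_nat (g x)) / (of_nat (h x) + 1)))"

definition F_computable :: "(nat \<Rightarrow> (nat list \<Rightarrow> nat) set) \<Rightarrow> real \<Rightarrow> bool" where
  "F_computable F \<alpha> \<longleftrightarrow> (\<exists>A. F_sequence F A \<and>
     (\<forall>x. \<bar>real_of_rat (A x) - \<alpha>\<bar> \<le> 1 / (real x + 1)))"

definition is_subfield_of_reals :: "real set \<Rightarrow> bool" where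
  "is_subfield_of_reals S \<longleftrightarrow> 0 \<in> S \<and> 1 \<in> S \<and>
     (\<forall>x\<in>S. \<forall>y\<in>S. x + y \<in> S \<and> x * y \<in> S) \<and>
     (\<forall>x\<in>S. - x \<in> S) \<and> (\<forall>x\<in>S. x \<noteq> 0 \<longrightarrow> inverse x \<in> S)"

end

theory Submission
  imports Defs
begin

lemma sc_zero: assumes "standard_conditions F" shows "in_cls F 1 (\<lambda>xs. 0)"
  using assms unfolding standard_conditions_def by (elim conjE) (assumption)?

lemma sc_suc: assumes "standard_conditions F" shows "in_cls F 1 (\<lambda>xs. Suc (xs ! 0))"
  using assms unfolding standard_conditions_def by (elim conjE) (assumption)?

lemma sc_proj: assumes "standard_conditions F" shows "\<forall>n i. 1 \<le> i \<and> i \<le> n \<longrightarrow> in_cls F n (\<lambda>xs. xs ! (i - 1))"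
  using assms unfolding standard_conditions_def by (elim conjE) (assumption)?

lemma sc_add: assumes "standard_conditions F" shows "in_cls F 2 (\<lambda>xs. xs ! 0 + xs ! 1)"
  using assms unfolding standard_conditions_def by (elim conjE) (assumption)?

lemma sc_mult: assumes "standard_conditions F" shows "in_cls F 2 (\<lambda>xs. xs ! 0 * xs ! 1)"
  using assms unfolding standard_conditions_def by (elim conjE) (assumption)?

lemma sc_sub: assumes "standard_conditions F" shows "in_cls F 2 (\<lambda>xs. xs ! 0 - xs ! 1)"
  using assms unfolding standard_conditions_def by (elim conjE) (assumption)?

lemma sc_comp: assumes "standard_conditions F" shows "\<forall>m n f gs. in_cls F m f \<and> length gs = m \<and> (\<forall>g\<in>set gs. in_cls F n g)
        \<longrightarrow> in_cls F n (\<lambda>xs. f (map (\<lambda>g. g xs) gs))"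
  using assms unfolding standard_conditions_def by (elim conjE) (assumption)?

lemma U_comp1:
  assumes sc: "standard_conditions F" and p: "in_cls F 1 p" and f: "unary_in F f"
    and q: "\<And>x. q x = p [f x]"
  shows "unary_in F q"
proof -
  have f': "in_cls F 1 (\<lambda>ys. f (ys!0))" using f unfolding unary_in_def .
  have "in_cls F 1 (\<lambda>xs. p (map (\<lambda>g. g xs) [\<lambda>ys. f (ys!0)]))"
    using sc_comp[OF sc, rule_format, of 1 p "[\<lambda>ys. f (ys!0)]" 1] p f' by simp
  then show ?thesis by (simp add: unary_in_def q)
qed

lemma U_comp2:
  assumes sc: "standard_conditions F" and p: "in_cls F 2 p" and f: "unary_in F f" and g: "unary_in F g"
    and q: "\<And>x. q x = p [f x, g x]"
  shows "unary_in F q"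
proof -
  have f': "in_cls F 1 (\<lambda>ys. f (ys!0))" using f unfolding unary_in_def .
  have g': "in_cls F 1 (\<lambda>ys. g (ys!0))" using g unfolding unary_in_def .
  have "in_cls F 1 (\<lambda>xs. p (map (\<lambda>g. g xs) [\<lambda>ys. f (ys!0), \<lambda>ys. g (ys!0)]))"
    using sc_comp[OF sc, rule_format, of 2 p "[\<lambda>ys. f (ys!0), \<lambda>ys. g (ys!0)]" 1] p f' g' by simp
  then show ?thesis by (simp add: unary_in_def q)
qed

lemma U_add: assumes sc: "standard_conditions F" and f: "unary_in F f" and g: "unary_in F g"
  shows "unary_in F (\<lambda>x. f x + g x)"
  by (rule U_comp2[OF sc sc_add[OF sc] f g]) simp
lemma U_mult: assumes sc: "standard_conditions F" and f: "unary_in F f" and g: "unary_in F g"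
  shows "unary_in F (\<lambda>x. f x * g x)"
  by (rule U_comp2[OF sc sc_mult[OF sc] f g]) simp
lemma U_sub: assumes sc: "standard_conditions F" and f: "unary_in F f" and g: "unary_in F g"
  shows "unary_in F (\<lambda>x. f x - g x)"
  by (rule U_comp2[OF sc sc_sub[OF sc] f g]) simp
lemma U_comp: assumes sc: "standard_conditions F" and f: "unary_in F f" and g: "unary_in F g"
  shows "unary_in F (\<lambda>x. f (g x))"
proof -
  have f': "in_cls F 1 (\<lambda>xs. f (xs ! 0))" using f unfolding unary_in_def .
  show ?thesis by (rule U_comp1[OF sc f' g]) simp
qed
lemma U_id: assumes "standard_conditions F" shows "unary_in F (\<lambda>x. x)"
  using sc_proj[OF assms, rule_format, of 1 1] by (simp add: unary_in_def)
lemma U_const: assumes sc: "standard_conditions F" shows "unary_in F (\<lambda>x. c)"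
proof (induction c)
  case 0 then show ?case using sc_zero[OF sc] by (simp add: unary_in_def)
next
  case (Suc c)
  show ?case by (rule U_comp1[OF sc sc_suc[OF sc] Suc]) simp
qed

definition apx :: "(nat\<Rightarrow>nat) \<Rightarrow> (nat\<Rightarrow>nat) \<Rightarrow> (nat\<Rightarrow>nat) \<Rightarrow> nat \<Rightarrow> real" where
  "apx f g h x = (real (f x) - real (g x)) / (real (h x) + 1)"

lemma comp_iff: "F_computable F \<alpha> \<longleftrightarrow> (\<exists>f g h. unary_in F f \<and> unary_in F g \<and> unary_in F h \<and>
   (\<forall>x. \<bar>apx f g h x - \<alpha>\<bar> \<le> 1 / (real x + 1)))"
proof -
  have key: "\<And>a b c. real_of_rat ((of_nat a - of_nat b) / (of_nat c + 1)) = (real a - real b) / (real c + 1)"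
    by (simp add: of_rat_divide of_rat_diff of_rat_add)
  show ?thesis
  proof
    assume "F_computable F \<alpha>"
    then obtain A f g h where u: "unary_in F f" "unary_in F g" "unary_in F h"
      and A: "\<forall>x. A x = (of_nat (f x) - of_nat (g x)) / (of_nat (h x) + 1)"
      and b: "\<forall>x. \<bar>real_of_rat (A x) - \<alpha>\<bar> \<le> 1 / (real x + 1)"
      unfolding F_computable_def F_sequence_def by blast
    have "\<forall>x. \<bar>apx f g h x - \<alpha>\<bar> \<le> 1 / (real x + 1)"
    proof
      fix x
      have "real_of_rat (A x) = apx f g h x" using A key by (simp add: apx_def)
      then show "\<bar>apx f g h x - \<alpha>\<bar> \<le> 1 / (real x + 1)" using b by metis
    qed
    then show "\<exists>f g h. unary_in F f \<and> unary_in F g \<and> unary_in F h \<and>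
      (\<forall>x. \<bar>apx f g h x - \<alpha>\<bar> \<le> 1 / (real x + 1))" using u by blast
  next
    assume "\<exists>f g h. unary_in F f \<and> unary_in F g \<and> unary_in F h \<and>
      (\<forall>x. \<bar>apx f g h x - \<alpha>\<bar> \<le> 1 / (real x + 1))"
    then obtain f g h where u: "unary_in F f" "unary_in F g" "unary_in F h"
      and b: "\<forall>x. \<bar>apx f g h x - \<alpha>\<bar> \<le> 1 / (real x + 1)" by blast
    define A where "A = (\<lambda>x. (of_nat (f x) - of_nat (g x)) / (of_nat (h x) + 1) :: rat)"
    have "F_sequence F A" unfolding F_sequence_def A_def using u by blast
    moreover have "\<forall>x. \<bar>real_of_rat (A x) - \<alpha>\<bar> \<le> 1 / (real x + 1)"
      using b key by (simp add: A_def apx_def)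
    ultimately show "F_computable F \<alpha>" unfolding F_computable_def by blast
  qed
qed

lemma add_frac:
  "(real (a1*(c2+1) + a2*(c1+1)) - real (b1*(c2+1)+b2*(c1+1))) / (real (c1*c2+c1+c2)+1)
   = (real a1 - real b1) / (real c1+1) + (real a2 - real b2) / (real c2+1)"
proof -
  have p1: "real c1 + 1 > 0" "real c2 + 1 > 0" by auto
  have d: "real (c1*c2+c1+c2) + 1 = (real c1 + 1) * (real c2 + 1)" by (simp add: algebra_simps)
  show ?thesis unfolding d using p1 by (simp add: field_simps)
qed

lemma mult_frac:
  "(real (a1*a2 + b1*b2) - real (a1*b2 + b1*a2)) / (real (c1*c2+c1+c2)+1)
   = (real a1 - real b1) / (real c1+1) * ((real a2 - real b2) / (real c2+1))"
proof -
  have p1: "real c1 + 1 > 0" "real c2 + 1 > 0" by auto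
  have d: "real (c1*c2+c1+c2) + 1 = (real c1 + 1) * (real c2 + 1)" by (simp add: algebra_simps)
  show ?thesis unfolding d using p1 by (simp add: field_simps)
qed

lemma inv_frac:
  fixes f g h :: nat
  shows "(real ((h+1)*(1-(1-(f-g)))) - real ((h+1)*(1-(1-(g-f))))) / (real ((f-g)+(g-f)-1)+1)
   = inverse ((real f - real g) / (real h+1))"
proof (cases "g < f")
  case True
  then have e: "1-(1-(f-g)) = 1" "1-(1-(g-f)) = 0" "real ((f-g)+(g-f)-1) + 1 = real f - real g" by auto
  show ?thesis unfolding e by simp
next
  case False
  show ?thesis
  proof (cases "f < g")
    case True
    then have e: "1-(1-(f-g)) = 0" "1-(1-(g-f)) = 1" "real ((f-g)+(g-f)-1) + 1 = real g - real f" by auto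
    have "real f - real g = - (real g - real f)" by simp
    then show ?thesis unfolding e by (auto simp: divide_simps algebra_simps)
  next
    case False
    with \<open>\<not> g < f\<close> have "f = g" by simp
    then show ?thesis by simp
  qed
qed

lemma mult_bound:
  fixes A B a b e M :: real
  assumes "\<bar>A - a\<bar> \<le> e" "\<bar>B - b\<bar> \<le> e" "e \<le> 1" "\<bar>a\<bar> \<le> M" "\<bar>b\<bar> \<le> M"
  shows "\<bar>A*B - a*b\<bar> \<le> (2*M+1)*e"
proof -
  have A: "\<bar>A\<bar> \<le> M + 1" using assms by linarith
  have e0: "e \<ge> 0" using assms(1) by linarith
  have eq: "A*B - a*b = A*(B-b) + b*(A-a)" by (simp add: algebra_simps)
  have t1: "\<bar>A*(B-b)\<bar> \<le> (M+1)*e" unfolding abs_mult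
    using A assms(2) e0 by (intro mult_mono) auto
  have t2: "\<bar>b*(A-a)\<bar> \<le> M*e" unfolding abs_mult
    using assms(1,5) e0 by (intro mult_mono) auto
  have "\<bar>A*B - a*b\<bar> \<le> \<bar>A*(B-b)\<bar> + \<bar>b*(A-a)\<bar>" unfolding eq by (rule abs_triangle_ineq)
  also have "\<dots> \<le> (M+1)*e + M*e" using t1 t2 by linarith
  finally show ?thesis by (simp add: algebra_simps)
qed

lemma inv_bound:
  fixes A a e K :: real
  assumes "\<bar>A - a\<bar> \<le> e" "e \<le> 1/K" "2/K \<le> \<bar>a\<bar>" "K > 0"
  shows "\<bar>inverse A - inverse a\<bar> \<le> e*K*K/2"
proof -
  have h1: "\<bar>a\<bar> - e \<le> \<bar>A\<bar>" using assms(1) by linarith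
  have "K*(\<bar>a\<bar> - e) \<le> K*\<bar>A\<bar>" using h1 assms(4) by (intro mult_left_mono) auto
  moreover have "K*e \<le> 1" "2 \<le> K*\<bar>a\<bar>" using assms(2,3,4) by (simp_all add: field_simps)
  ultimately have "1 \<le> K*\<bar>A\<bar>" by (simp add: algebra_simps)
  then have A: "\<bar>A\<bar> \<ge> 1/K" using assms(4) by (simp add: field_simps)
  have Ap: "\<bar>A\<bar> > 0" using A assms(4) by (smt (verit) divide_pos_pos)
  have ap: "\<bar>a\<bar> > 0" using assms(3,4) by (smt (verit) divide_pos_pos)
  have eq: "inverse A - inverse a = (a - A) / (A * a)" using Ap ap by (simp add: field_simps)
  have "\<bar>inverse A - inverse a\<bar> = \<bar>A - a\<bar> / (\<bar>A\<bar> * \<bar>a\<bar>)" unfolding eq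
    by (simp add: abs_mult abs_minus_commute)
  also have "\<dots> \<le> e / ((1/K) * (2/K))"
  proof (rule frac_le)
    show "0 \<le> e" using assms(1) by linarith
    show "\<bar>A - a\<bar> \<le> e" by fact
    show "0 < 1 / K * (2 / K)" using assms(4) by simp
    show "1 / K * (2 / K) \<le> \<bar>A\<bar> * \<bar>a\<bar>" using A assms(3,4) by (intro mult_mono) auto
  qed
  also have "\<dots> = e*K*K/2" using assms(4) by (simp add: field_simps)
  finally show ?thesis .
qed


lemma cancel_aux: "(c::real) \<noteq> 0 \<Longrightarrow> c * (1 / (c * d)) = 1 / d"
  by simp

lemma cancel_aux2: "(k::real) \<noteq> 0 \<Longrightarrow> (1 / (k * k * d)) * k * k / 2 = 1 / (2 * d)"
  by (simp add: field_simps)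

lemma cancel_aux3: "(d::real) > 0 \<Longrightarrow> 1 / (2 * d) \<le> 1 / d"
  by (simp add: field_simps)

lemma get_rep:
  assumes "F_computable F a"
  obtains f g h where "unary_in F f" "unary_in F g" "unary_in F h"
    "\<And>x. \<bar>apx f g h x - a\<bar> \<le> 1 / (real x + 1)"
  using assms unfolding comp_iff by blast

lemma comp_add:
  assumes sc: "standard_conditions F" and A: "F_computable F a" and B: "F_computable F b"
  shows "F_computable F (a + b)"
proof -
  obtain f1 g1 h1 where u1: "unary_in F f1" "unary_in F g1" "unary_in F h1"
    and b1: "\<And>x. \<bar>apx f1 g1 h1 x - a\<bar> \<le> 1 / (real x + 1)" using get_rep[OF A] by blast
  obtain f2 g2 h2 where u2: "unary_in F f2" "unary_in F g2" "unary_in F h2"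
    and b2: "\<And>x. \<bar>apx f2 g2 h2 x - b\<bar> \<le> 1 / (real x + 1)" using get_rep[OF B] by blast
  define s where "s = (\<lambda>x::nat. 2*x+1)"
  have us: "unary_in F s" unfolding s_def by (intro U_add U_mult U_const U_id sc)
  define F1 where "F1 = (\<lambda>x. f1 (s x))"
  define G1 where "G1 = (\<lambda>x. g1 (s x))"
  define H1 where "H1 = (\<lambda>x. h1 (s x))"
  define F2 where "F2 = (\<lambda>x. f2 (s x))"
  define G2 where "G2 = (\<lambda>x. g2 (s x))"
  define H2 where "H2 = (\<lambda>x. h2 (s x))"
  have uu: "unary_in F F1" "unary_in F G1" "unary_in F H1" "unary_in F F2" "unary_in F G2" "unary_in F H2"
    unfolding F1_def G1_def H1_def F2_def G2_def H2_def using u1 u2 us by (auto intro: U_comp sc)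
  define fn where "fn = (\<lambda>x. F1 x * (H2 x + 1) + F2 x * (H1 x + 1))"
  define gn where "gn = (\<lambda>x. G1 x * (H2 x + 1) + G2 x * (H1 x + 1))"
  define hn where "hn = (\<lambda>x. H1 x * H2 x + H1 x + H2 x)"
  have un1: "unary_in F fn" unfolding fn_def by (intro U_add U_mult U_const sc uu)
  have un2: "unary_in F gn" unfolding gn_def by (intro U_add U_mult U_const sc uu)
  have un3: "unary_in F hn" unfolding hn_def by (intro U_add U_mult U_const sc uu)
  note un = un1 un2 un3
  have "\<forall>x. \<bar>apx fn gn hn x - (a + b)\<bar> \<le> 1 / (real x + 1)"
  proof
    fix x
    have eq: "apx fn gn hn x = apx f1 g1 h1 (s x) + apx f2 g2 h2 (s x)"
      unfolding apx_def fn_def gn_def hn_def F1_def G1_def H1_def F2_def G2_def H2_def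
      by (rule add_frac)
    have "\<bar>apx fn gn hn x - (a + b)\<bar> \<le> \<bar>apx f1 g1 h1 (s x) - a\<bar> + \<bar>apx f2 g2 h2 (s x) - b\<bar>"
      unfolding eq by linarith
    also have "\<dots> \<le> 1 / (real (s x) + 1) + 1 / (real (s x) + 1)" using b1 b2 by (intro add_mono)
    also have "\<dots> = 1 / (real x + 1)" unfolding s_def by (simp add: field_simps)
    finally show "\<bar>apx fn gn hn x - (a + b)\<bar> \<le> 1 / (real x + 1)" .
  qed
  then show ?thesis unfolding comp_iff using un by blast
qed

lemma comp_mult:
  assumes sc: "standard_conditions F" and A: "F_computable F a" and B: "F_computable F b"
  shows "F_computable F (a * b)"
proof -
  obtain f1 g1 h1 where u1: "unary_in F f1" "unary_in F g1" "unary_in F h1"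
    and b1: "\<And>x. \<bar>apx f1 g1 h1 x - a\<bar> \<le> 1 / (real x + 1)" using get_rep[OF A] by blast
  obtain f2 g2 h2 where u2: "unary_in F f2" "unary_in F g2" "unary_in F h2"
    and b2: "\<And>x. \<bar>apx f2 g2 h2 x - b\<bar> \<le> 1 / (real x + 1)" using get_rep[OF B] by blast
  obtain M :: nat where M: "max \<bar>a\<bar> \<bar>b\<bar> \<le> real M" using real_arch_simple by blast
  define s where "s = (\<lambda>x::nat. (2*M+1)*x+2*M)"
  have us: "unary_in F s" unfolding s_def by (intro U_add U_mult U_const U_id sc)
  define F1 where "F1 = (\<lambda>x. f1 (s x))"
  define G1 where "G1 = (\<lambda>x. g1 (s x))"
  define H1 where "H1 = (\<lambda>x. h1 (s x))"
  define F2 where "F2 = (\<lambda>x. f2 (s x))"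
  define G2 where "G2 = (\<lambda>x. g2 (s x))"
  define H2 where "H2 = (\<lambda>x. h2 (s x))"
  have uu: "unary_in F F1" "unary_in F G1" "unary_in F H1" "unary_in F F2" "unary_in F G2" "unary_in F H2"
    unfolding F1_def G1_def H1_def F2_def G2_def H2_def using u1 u2 us by (auto intro: U_comp sc)
  define fn where "fn = (\<lambda>x. F1 x * F2 x + G1 x * G2 x)"
  define gn where "gn = (\<lambda>x. F1 x * G2 x + G1 x * F2 x)"
  define hn where "hn = (\<lambda>x. H1 x * H2 x + H1 x + H2 x)"
  have un1: "unary_in F fn" unfolding fn_def by (intro U_add U_mult U_const sc uu)
  have un2: "unary_in F gn" unfolding gn_def by (intro U_add U_mult U_const sc uu)
  have un3: "unary_in F hn" unfolding hn_def by (intro U_add U_mult U_const sc uu)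
  note un = un1 un2 un3
  have "\<forall>x. \<bar>apx fn gn hn x - (a * b)\<bar> \<le> 1 / (real x + 1)"
  proof
    fix x
    have eq: "apx fn gn hn x = apx f1 g1 h1 (s x) * apx f2 g2 h2 (s x)"
      unfolding apx_def fn_def gn_def hn_def F1_def G1_def H1_def F2_def G2_def H2_def
      by (rule mult_frac)
    have e1: "1 / (real (s x) + 1) \<le> 1" by simp
    have "\<bar>apx fn gn hn x - (a * b)\<bar> \<le> (2*real M+1) * (1 / (real (s x) + 1))"
      unfolding eq using b1 b2 e1 M by (intro mult_bound) auto
    also have "\<dots> = 1 / (real x + 1)"
    proof -
      have sx: "real (s x) + 1 = (2*real M+1)*(real x+1)" unfolding s_def by (simp add: algebra_simps)
      have p: "2*real M + 1 > 0" "real x + 1 > 0" by auto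
      have "(2*real M+1) * (1 / ((2*real M+1)*(real x+1))) = 1 / (real x + 1)"
        using p by (intro cancel_aux) simp
      then show ?thesis unfolding sx .
    qed
    finally show "\<bar>apx fn gn hn x - (a * b)\<bar> \<le> 1 / (real x + 1)" .
  qed
  then show ?thesis unfolding comp_iff using un by blast
qed

lemma comp_inv:
  assumes sc: "standard_conditions F" and A: "F_computable F a" and a0: "a \<noteq> 0"
  shows "F_computable F (inverse a)"
proof -
  obtain f1 g1 h1 where u1: "unary_in F f1" "unary_in F g1" "unary_in F h1"
    and b1: "\<And>x. \<bar>apx f1 g1 h1 x - a\<bar> \<le> 1 / (real x + 1)" using get_rep[OF A] by blast
  obtain K :: nat where K: "2 / \<bar>a\<bar> < real K" using reals_Archimedean2 by blast
  have Kp: "real K > 0" using K a0 by (smt (verit) divide_pos_pos zero_less_abs_iff)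
  have K2: "2 / real K \<le> \<bar>a\<bar>" using K Kp a0 by (simp add: field_simps)
  define s where "s = (\<lambda>x::nat. (K*K)*x+(K*K-1))"
  have us: "unary_in F s" unfolding s_def by (intro U_add U_mult U_const U_id sc)
  define F1 where "F1 = (\<lambda>x. f1 (s x))"
  define G1 where "G1 = (\<lambda>x. g1 (s x))"
  define H1 where "H1 = (\<lambda>x. h1 (s x))"
  have uu: "unary_in F F1" "unary_in F G1" "unary_in F H1"
    unfolding F1_def G1_def H1_def using u1 us by (auto intro: U_comp sc)
  define fn where "fn = (\<lambda>x. (H1 x + 1) * (1 - (1 - (F1 x - G1 x))))"
  define gn where "gn = (\<lambda>x. (H1 x + 1) * (1 - (1 - (G1 x - F1 x))))"
  define hn where "hn = (\<lambda>x. (F1 x - G1 x) + (G1 x - F1 x) - 1)"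
  have un1: "unary_in F fn" unfolding fn_def by (intro U_add U_mult U_sub U_const sc uu)
  have un2: "unary_in F gn" unfolding gn_def by (intro U_add U_mult U_sub U_const sc uu)
  have un3: "unary_in F hn" unfolding hn_def by (intro U_add U_mult U_sub U_const sc uu)
  note un = un1 un2 un3
  have "\<forall>x. \<bar>apx fn gn hn x - inverse a\<bar> \<le> 1 / (real x + 1)"
  proof
    fix x
    have eq: "apx fn gn hn x = inverse (apx f1 g1 h1 (s x))"
      unfolding apx_def fn_def gn_def hn_def F1_def G1_def H1_def
      by (rule inv_frac)
    have K1: "K*K \<ge> 1" using Kp by simp
    have sn: "s x + 1 = K*K*(x+1)" unfolding s_def using K1 by (simp add: algebra_simps)
    have sx: "real (s x) + 1 = real K * real K * (real x + 1)"
    proof -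
      have "real (s x) + 1 = real (s x + 1)" by simp
      also have "\<dots> = real K * real K * (real x + 1)" unfolding sn by (simp add: algebra_simps)
      finally show ?thesis .
    qed
    have Kr1: "real K \<ge> 1" using Kp by simp
    have o1: "1 \<le> real K * (real x + 1)" 
    proof -
      have "1 * 1 \<le> real K * (real x + 1)" using Kr1 by (intro mult_mono) auto
      then show ?thesis by simp
    qed
    have o2: "real K * 1 \<le> real K * (real K * (real x + 1))" using o1 Kp by (intro mult_left_mono) auto
    have e1: "1 / (real (s x) + 1) \<le> 1 / real K" unfolding sx
      by (rule divide_left_mono) (use o2 Kp in \<open>auto simp: mult.assoc\<close>)
    have "\<bar>apx fn gn hn x - inverse a\<bar> \<le> (1 / (real (s x) + 1)) * real K * real K / 2"
      unfolding eq using b1 e1 K2 Kp by (intro inv_bound) auto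
    also have "\<dots> = 1 / (2 * (real x + 1))" unfolding sx using Kp by (intro cancel_aux2) simp
    also have "\<dots> \<le> 1 / (real x + 1)" by (intro cancel_aux3) simp
    finally show "\<bar>apx fn gn hn x - inverse a\<bar> \<le> 1 / (real x + 1)" .
  qed
  then show ?thesis unfolding comp_iff using un by blast
qed

lemma comp_neg:
  assumes A: "F_computable F a" shows "F_computable F (- a)"
proof -
  obtain f1 g1 h1 where u1: "unary_in F f1" "unary_in F g1" "unary_in F h1"
    and b1: "\<And>x. \<bar>apx f1 g1 h1 x - a\<bar> \<le> 1 / (real x + 1)" using get_rep[OF A] by blast
  have "\<forall>x. \<bar>apx g1 f1 h1 x - (- a)\<bar> \<le> 1 / (real x + 1)"
  proof
    fix x
    have "apx g1 f1 h1 x - (- a) = - (apx f1 g1 h1 x - a)" unfolding apx_def by (simp add: field_simps)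
    then show "\<bar>apx g1 f1 h1 x - (- a)\<bar> \<le> 1 / (real x + 1)" using b1[of x] by simp
  qed
  then show ?thesis unfolding comp_iff using u1 by blast
qed

lemma comp_const:
  assumes sc: "standard_conditions F" shows "F_computable F (real c)"
proof -
  have "\<forall>x. \<bar>apx (\<lambda>x. c) (\<lambda>x. 0) (\<lambda>x. 0) x - real c\<bar> \<le> 1 / (real x + 1)"
    by (simp add: apx_def)
  then show ?thesis unfolding comp_iff using U_const[OF sc] by blast
qed

theorem mainTheorem12:
  fixes F :: "nat \<Rightarrow> (nat list \<Rightarrow> nat) set"
  assumes "standard_conditions F"
  shows "is_subfield_of_reals {\<alpha>. F_computable F \<alpha>}"
  unfolding is_subfield_of_reals_def
proof (intro conjI ballI)
  show "0 \<in> {\<alpha>. F_computable F \<alpha>}" using comp_const[OF assms, of 0] by simp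
  show "1 \<in> {\<alpha>. F_computable F \<alpha>}" using comp_const[OF assms, of 1] by simp
  fix x y assume x: "x \<in> {\<alpha>. F_computable F \<alpha>}" and y: "y \<in> {\<alpha>. F_computable F \<alpha>}"
  then show "x + y \<in> {\<alpha>. F_computable F \<alpha>}" using comp_add[OF assms] by blast
  show "x * y \<in> {\<alpha>. F_computable F \<alpha>}" using x y comp_mult[OF assms] by blast
next
  fix x assume x: "x \<in> {\<alpha>. F_computable F \<alpha>}"
  then show "- x \<in> {\<alpha>. F_computable F \<alpha>}" using comp_neg by blast
next
  fix x assume x: "x \<in> {\<alpha>. F_computable F \<alpha>}"
  then show "x \<noteq> 0 \<longrightarrow> inverse x \<in> {\<alpha>. F_computable F \<alpha>}" using comp_inv[OF assms] by blast
qed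

end
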